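(* Define $E:[0,\pi/2]\to\mathbb{R}$ by $E(0)=0$ and $E(\alpha)=\frac{1}{\sin\alpha}\left(\int_0^\alpha\sqrt{\cos t}\,dt\right)^2$ for $\alpha\in(0,\pi/2]$. Then $E$ is concave on $[0,\pi/2]$, with $E''(\alpha)<0$ for all $\alpha\in(0,\pi/2)$, and $E$ is strictly sub-additive: for all $\alpha,\beta>0$ with $\alpha+\beta\le\pi/2$, $$E(\alpha+\beta)<E(\alpha)+E(\beta).$$ *)

theory Defs
  imports "HOL-Analysis.Analysis"
begin

definition E :: "real \<Rightarrow> real" where
  "E a = (if a = 0 then 0 else (integral {0..a} (\<lambda>t. sqrt (cos t)))\<^sup>2 / sin a)"

end

theory Submission
  imports Defs
begin

lemma concave_interval:
  fixes f f' :: "real \<Rightarrow> real"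
  assumes cont: "continuous_on {a..b} f"
    and der: "\<And>x. a < x \<Longrightarrow> x < b \<Longrightarrow> (f has_real_derivative f' x) (at x)"
    and mono: "\<And>x y. a < x \<Longrightarrow> x < y \<Longrightarrow> y < b \<Longrightarrow> f' y \<le> f' x"
  shows "concave_on {a..b} f"
proof (rule concave_on_linorderI)
  show "convex {a..b}" by simp
  fix t x y :: real
  assume t: "t > 0" "t < 1" and xy: "x \<in> {a..b}" "y \<in> {a..b}" "x < y"
  define z where "z = (1 - t) * x + t * y"
  have zx: "z - x = t * (y - x)" and yz: "y - z = (1 - t) * (y - x)" by (simp_all add: z_def algebra_simps)
  have xz: "x < z" using zx t xy by (metis diff_gt_0_iff_gt mult_pos_pos)
  have zy: "z < y" using yz t xy by (metis diff_gt_0_iff_gt mult_pos_pos)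
  have d: "\<And>u. x < u \<Longrightarrow> u < y \<Longrightarrow> f differentiable (at u)"
  proof -
    fix u assume "x < u" "u < y"
    then have "(f has_real_derivative f' u) (at u)" using xy by (intro der) auto
    then show "f differentiable (at u)" unfolding real_differentiable_def by blast
  qed
  have c1: "continuous_on {x..z} f" using xy zy by (intro continuous_on_subset[OF cont]) auto
  have c2: "continuous_on {z..y} f" using xy xz by (intro continuous_on_subset[OF cont]) auto
  obtain l1 \<xi> where \<xi>: "x < \<xi>" "\<xi> < z" "DERIV f \<xi> :> l1" "f z - f x = (z - x) * l1"
    using MVT[OF xz c1] d zy by (meson order.strict_trans)
  obtain l2 \<eta> where \<eta>: "z < \<eta>" "\<eta> < y" "DERIV f \<eta> :> l2" "f y - f z = (y - z) * l2"
    using MVT[OF zy c2] d xz by (meson order.strict_trans)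
  have l1: "l1 = f' \<xi>" using DERIV_unique[OF \<xi>(3) der[of \<xi>]] \<xi> xy xz zy by auto
  have l2: "l2 = f' \<eta>" using DERIV_unique[OF \<eta>(3) der[of \<eta>]] \<eta> xy zy xz by auto
  have le: "l2 \<le> l1" unfolding l1 l2 using mono[of \<xi> \<eta>] \<xi> \<eta> xy by auto
  have "(1 - t) * (f z - f x) = (1 - t) * t * (y - x) * l1" using \<xi>(4) zx by simp
  moreover have "t * (f y - f z) = (1 - t) * t * (y - x) * l2" using \<eta>(4) yz by simp
  moreover have "(1 - t) * t * (y - x) * l2 \<le> (1 - t) * t * (y - x) * l1"
    using le t xy by (intro mult_left_mono) auto
  ultimately have "t * (f y - f z) \<le> (1 - t) * (f z - f x)" by linarith
  then show "(1 - t) * f x + t * f y \<le> f ((1 - t) *\<^sub>R x + t *\<^sub>R y)"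
    by (simp add: z_def algebra_simps)
qed

definition F :: "real \<Rightarrow> real" where "F x = integral {0..x} (\<lambda>t. sqrt (cos t))"

lemma F_deriv_within: "x \<in> {0..2} \<Longrightarrow> (F has_real_derivative sqrt (cos x)) (at x within {0..2})"
  unfolding F_def by (rule integral_has_real_derivative) (auto intro!: continuous_intros)

lemma F_deriv: "0 < x \<Longrightarrow> x < 2 \<Longrightarrow> (F has_real_derivative sqrt (cos x)) (at x)"
  using F_deriv_within[of x] at_within_interior[of x "{0..2::real}"] by auto

lemma F_cont: "continuous_on {0..2} F"
  using F_deriv_within DERIV_continuous continuous_on_eq_continuous_within by blast

lemma sqcos_deriv: "cos u > 0 \<Longrightarrow> ((\<lambda>u. sqrt (cos u)) has_real_derivative (- sin u / (2 * sqrt (cos u)))) (at u)"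
  apply (rule DERIV_chain2[OF DERIV_real_sqrt DERIV_cos, THEN DERIV_cong])
  by (auto simp: field_simps)

lemma G_deriv: "0 < u \<Longrightarrow> u < pi/2 \<Longrightarrow> ((\<lambda>u. sin u / sqrt (cos u) - F u) has_real_derivative (sin u)^2/(2 * cos u * sqrt (cos u))) (at u)"
proof -
  assume u: "0 < u" "u < pi/2"
  have c: "cos u > 0" using u by (intro cos_gt_zero_pi) auto
  have u2: "u < 2" using u pi_less_4 by linarith
  show ?thesis
    apply (rule DERIV_cong[OF DERIV_diff[OF DERIV_divide[OF DERIV_sin sqcos_deriv[OF c]] F_deriv[OF u(1) u2]]])
    using c by (simp_all add: field_simps power2_eq_square)
qed

lemma alg1: "r > 0 \<Longrightarrow> s > (0::real) \<Longrightarrow>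
 ((2 * r * r + (- s / (2 * r)) * (2 * f)) * s - 2 * f * r * r^2) / (s * s)
   - ((of_nat 2 * (r * f ^ (2 - Suc 0)) * r^2 + (- s) * f^2) * s^2 - f^2 * r^2 * (of_nat 2 * (r^2 * s ^ (2 - Suc 0)))) / (s^2 * s^2)
 = ((s^2 + 2 * (r^2)^2) * f - 2 * r^2 * r * s) * (r * f - s) / (r * s^3)"
  apply (simp add: field_simps)
  apply algebra
  done

definition E1 :: "real \<Rightarrow> real" where
  "E1 x = 2 * F x * sqrt (cos x) / sin x - (F x)^2 * cos x / (sin x)^2"
definition E2 :: "real \<Rightarrow> real" where
  "E2 x = (((sin x)^2 + 2 * (cos x)^2) * F x - 2 * cos x * sqrt (cos x) * sin x) * (sqrt (cos x) * F x - sin x) / (sqrt (cos x) * (sin x)^3)"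

lemma E1_deriv: "0 < u \<Longrightarrow> u < pi/2 \<Longrightarrow> (E1 has_real_derivative E2 u) (at u)"
proof -
  assume u: "0 < u" "u < pi/2"
  have c: "cos u > 0" using u by (intro cos_gt_zero_pi) auto
  have s: "sin u > 0" using u by (intro sin_gt_zero) auto
  have u2: "u < 2" using u pi_less_4 by linarith
  note Fd = F_deriv[OF u(1) u2]
  have "(E1 has_real_derivative
     ((2 * sqrt (cos u) * sqrt (cos u) + (- sin u / (2 * sqrt (cos u))) * (2 * F u)) * sin u - 2 * F u * sqrt (cos u) * cos u) / (sin u * sin u)
   - ((of_nat 2 * (sqrt (cos u) * F u ^ (2 - Suc 0)) * cos u + (- sin u) * (F u)^2) * (sin u)^2 - (F u)^2 * cos u * (of_nat 2 * (cos u * sin u ^ (2 - Suc 0)))) / ((sin u)^2 * (sin u)^2)) (at u)"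
    unfolding E1_def
    apply (rule DERIV_diff[OF DERIV_divide[OF DERIV_mult[OF DERIV_cmult[OF Fd] sqcos_deriv[OF c]] DERIV_sin] DERIV_divide[OF DERIV_mult[OF DERIV_power[OF Fd] DERIV_cos] DERIV_power[OF DERIV_sin]]])
    using s by auto
  moreover have "((2 * sqrt (cos u) * sqrt (cos u) + (- sin u / (2 * sqrt (cos u))) * (2 * F u)) * sin u - 2 * F u * sqrt (cos u) * cos u) / (sin u * sin u)
   - ((of_nat 2 * (sqrt (cos u) * F u ^ (2 - Suc 0)) * cos u + (- sin u) * (F u)^2) * (sin u)^2 - (F u)^2 * cos u * (of_nat 2 * (cos u * sin u ^ (2 - Suc 0)))) / ((sin u)^2 * (sin u)^2) = E2 u"
  proof -
    define r where "r = sqrt (cos u)"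
    have r: "r > 0" "cos u = r^2" using c by (auto simp: r_def)
    show ?thesis unfolding E2_def r_def[symmetric] r(2)
      using alg1[OF r(1) s, of "F u"] r(1) by simp
  qed
  ultimately show ?thesis by simp
qed


lemma F0: "F 0 = 0" unfolding F_def by simp

lemma F_upper: "0 < x \<Longrightarrow> x < pi/2 \<Longrightarrow> F x < sin x / sqrt (cos x)"
proof -
  assume x: "0 < x" "x < pi/2"
  have "(\<lambda>u. sin u / sqrt (cos u) - F u) 0 < (\<lambda>u. sin u / sqrt (cos u) - F u) x"
  proof (rule DERIV_pos_imp_increasing_open[OF x(1)])
    fix u assume u: "0 < u" "u < x"
    have "sin u > 0" using u x by (intro sin_gt_zero) auto
    moreover have "cos u > 0" using u x by (intro cos_gt_zero_pi) auto
    ultimately show "\<exists>y. ((\<lambda>u. sin u / sqrt (cos u) - F u) has_real_derivative y) (at u) \<and> 0 < y"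
      using G_deriv[of u] u x by (intro exI[of _ "(sin u)^2 / (2 * cos u * sqrt (cos u))"]) auto
  next
    have "\<forall>u\<in>{0..x}. cos u > 0" using x by (auto intro!: cos_gt_zero_pi)
    moreover have "continuous_on {0..x} F" using x pi_less_4 by (intro continuous_on_subset[OF F_cont]) auto
    ultimately show "continuous_on {0..x} (\<lambda>u. sin u / sqrt (cos u) - F u)"
      by (intro continuous_intros) auto
  qed
  then show ?thesis by (simp add: F0)
qed

lemma F_lower: "0 \<le> x \<Longrightarrow> x \<le> pi/2 \<Longrightarrow> sin x \<le> F x"
proof -
  assume x: "0 \<le> x" "x \<le> pi/2"
  have "(\<lambda>u. F u - sin u) 0 \<le> (\<lambda>u. F u - sin u) x"
  proof (rule DERIV_nonneg_imp_increasing_open[OF x(1)])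
    fix u assume u: "0 < u" "u < x"
    have c: "cos u \<ge> 0" "cos u \<le> 1" using u x by (auto intro!: cos_ge_zero)
    have "cos u \<le> sqrt (cos u)"
    proof -
      have "sqrt (cos u) \<le> 1" using c by simp
      then have "sqrt (cos u) * sqrt (cos u) \<le> sqrt (cos u)"
        using mult_left_mono[of "sqrt (cos u)" 1 "sqrt (cos u)"] c by simp
      moreover have "sqrt (cos u) * sqrt (cos u) = cos u" using c by (simp add: real_sqrt_mult_self)
      ultimately show ?thesis by simp
    qed
    moreover have "((\<lambda>u. F u - sin u) has_real_derivative sqrt (cos u) - cos u) (at u)"
      using u x pi_less_4 by (intro DERIV_diff F_deriv DERIV_sin) auto
    ultimately show "\<exists>y. ((\<lambda>u. F u - sin u) has_real_derivative y) (at u) \<and> 0 \<le> y" by auto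
  next
    have "continuous_on {0..x} F" using x pi_less_4 by (intro continuous_on_subset[OF F_cont]) auto
    then show "continuous_on {0..x} (\<lambda>u. F u - sin u)" by (intro continuous_intros)
  qed
  then show ?thesis by (simp add: F0)
qed

lemma E_deriv: "0 < x \<Longrightarrow> x < 2 \<Longrightarrow> (E has_real_derivative E1 x) (at x)"
proof -
  assume x: "0 < x" "x < 2"
  have s: "sin x > 0" using x pi_gt3 by (intro sin_gt_zero) auto
  have "((\<lambda>x. (F x)^2 / sin x) has_real_derivative E1 x) (at x)"
    apply (rule DERIV_cong[OF DERIV_divide[OF DERIV_power[OF F_deriv[OF x]] DERIV_sin]])
    using s by (auto simp: E1_def field_simps power2_eq_square)
  then show ?thesis
    apply (rule has_field_derivative_transform_within_open[where S="{0<..<2}"])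
    using x by (auto simp: E_def F_def)
qed

lemma E2_neg: "0 < x \<Longrightarrow> x < pi/2 \<Longrightarrow> E2 x < 0"
proof -
  assume x: "0 < x" "x < pi/2"
  define r where "r = sqrt (cos x)"
  define s where "s = sin x"
  define c where "c = cos x"
  have c0: "c > 0" using x by (auto simp: c_def intro!: cos_gt_zero_pi)
  have s0: "s > 0" using x by (auto simp: s_def intro!: sin_gt_zero)
  have sc: "s^2 + c^2 = 1" by (simp add: s_def c_def)
  have "c^2 < 1" using sc s0 by (smt (verit) zero_less_power)
  then have c1: "c < 1" using c0 by (simp add: abs_square_less_1)
  have r0: "r > 0" and rr: "r * r = c" using c0 by (auto simp: r_def c_def)
  have r1: "r < 1"
  proof (rule ccontr)
    assume "\<not> r < 1"
    then have "1 * 1 \<le> r * r" by (intro mult_mono) auto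
    then show False using rr c1 by simp
  qed
  have Fl: "s \<le> F x" using F_lower[of x] x by (simp add: s_def)
  have Fu: "F x < s / r" using F_upper[OF x] by (simp add: s_def r_def)
  have B: "r * F x - s < 0" using Fu r0 by (simp add: field_simps)
  have "(s^2 + 2*c^2) * s \<le> (s^2 + 2*c^2) * F x" using Fl by (intro mult_left_mono) auto
  moreover have "2 * c * r * s < (s^2 + 2*c^2) * s"
  proof -
    have p: "0 < 2 * c * (1 - r)" using c0 r1 by simp
    have q: "0 \<le> (1 - c)^2" by simp
    have "1 + c^2 - 2 * c * r = (1 - c)^2 + 2 * c * (1 - r)" by (simp add: power2_eq_square algebra_simps)
    then have "2 * c * r < 1 + c^2" using p q by linarith
    also have "1 + c^2 = s^2 + 2*c^2" using sc by simp
    finally show ?thesis using s0 by (intro mult_strict_right_mono)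
  qed
  ultimately have A: "(s^2 + 2*c^2) * F x - 2 * c * r * s > 0" by linarith
  have "E2 x = ((s^2 + 2*c^2) * F x - 2 * c * r * s) * (r * F x - s) / (r * s^3)"
    by (simp add: E2_def r_def s_def c_def)
  also have "\<dots> < 0" using A B r0 s0 by (intro divide_neg_pos mult_pos_neg) auto
  finally show ?thesis .
qed

lemma E1_decr: "0 < x \<Longrightarrow> x < y \<Longrightarrow> y < pi/2 \<Longrightarrow> E1 y < E1 x"
proof -
  assume xy: "0 < x" "x < y" "y < pi/2"
  have "\<forall>u\<in>{x..y}. isCont E1 u" using xy by (auto intro!: DERIV_isCont[OF E1_deriv])
  then have cE1: "continuous_on {x..y} E1" by (intro continuous_at_imp_continuous_on) auto
  show ?thesis
  proof (rule DERIV_neg_imp_decreasing_open[OF xy(2) _ cE1])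
    fix u assume "x < u" "u < y"
    then show "\<exists>z. (E1 has_real_derivative z) (at u) \<and> z < 0"
      using xy E1_deriv[of u] E2_neg[of u] by auto
  qed
qed

lemma E_cont0: "continuous (at 0 within {0..pi/2}) E"
proof -
  have E0: "E 0 = 0" by (simp add: E_def)
  have "(F \<longlongrightarrow> F 0) (at 0 within {0..2})"
    using F_cont unfolding continuous_on_def by (meson atLeastAtMost_iff order_refl zero_le_numeral)
  moreover have sub: "{0..pi/2} \<subseteq> {0..2::real}" using pi_less_4 by auto
  ultimately have "(F \<longlongrightarrow> F 0) (at 0 within {0..pi/2})" by (rule tendsto_within_subset)
  then have "(F \<longlongrightarrow> 0) (at 0 within {0..pi/2})" by (simp add: F0)
  then have up: "((\<lambda>x. F x / sqrt (cos x)) \<longlongrightarrow> 0 / sqrt (cos 0)) (at 0 within {0..pi/2})"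
    by (intro tendsto_intros) auto
  have ev: "eventually (\<lambda>x. 0 < x \<and> x < pi/2) (at 0 within {0..pi/2})"
    unfolding eventually_at by (intro exI[of _ "pi/2"]) (auto simp: dist_real_def)
  have "(E \<longlongrightarrow> 0) (at 0 within {0..pi/2})"
  proof (rule tendsto_sandwich[where f="\<lambda>_. 0" and h="\<lambda>x. F x / sqrt (cos x)"])
    show "eventually (\<lambda>x. 0 \<le> E x) (at 0 within {0..pi/2})"
      using ev
    proof eventually_elim
      case (elim x)
      have "sin x > 0" using elim by (intro sin_gt_zero) auto
      then show ?case by (simp add: E_def)
    qed
    show "eventually (\<lambda>x. E x \<le> F x / sqrt (cos x)) (at 0 within {0..pi/2})"
      using ev
    proof eventually_elim
      case (elim x)
      have s: "sin x > 0" using elim by (intro sin_gt_zero) auto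
      have c: "sqrt (cos x) > 0" using elim by (auto intro!: cos_gt_zero_pi)
      have Fl: "sin x \<le> F x" using F_lower[of x] elim by simp
      have Fu: "F x * sqrt (cos x) < sin x" using F_upper[of x] elim c by (simp add: field_simps)
      have F0: "F x \<ge> 0" using Fl s by linarith
      have num: "F x * (F x * sqrt (cos x)) \<le> F x * sin x"
        using mult_left_mono[OF less_imp_le[OF Fu] F0] .
      have "F x / sqrt (cos x) - (F x)^2 / sin x = (F x * sin x - F x * (F x * sqrt (cos x))) / (sin x * sqrt (cos x))"
        using s c by (simp add: field_simps power2_eq_square)
      also have "\<dots> \<ge> 0" using num s c by (intro divide_nonneg_pos) auto
      finally have "(F x)^2 / sin x \<le> F x / sqrt (cos x)" by simp
      moreover have "E x = (F x)^2 / sin x" using elim by (simp add: E_def F_def)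
      ultimately show ?case by simp
    qed
  qed (use up in auto)
  then show ?thesis using E0 by (simp add: continuous_within)
qed

lemma E_cont: "continuous_on {0..pi/2} E"
proof -
  have "continuous (at x within {0..pi/2}) E" if x: "x \<in> {0..pi/2}" for x
  proof (cases "x = 0")
    case True then show ?thesis using E_cont0 by simp
  next
    case False
    then have "0 < x" "x < 2" using x pi_less_4 by auto
    then have "isCont E x" by (rule DERIV_isCont[OF E_deriv])
    then show ?thesis by (rule continuous_at_imp_continuous_within)
  qed
  then show ?thesis by (simp add: continuous_on_eq_continuous_within)
qed

theorem proposition4p1:
  shows "concave_on {0..pi/2} E
    \<and> (\<forall>a\<in>{0<..<pi/2}. E differentiable (at a) \<and> deriv E differentiable (at a)
                          \<and> deriv (deriv E) a < 0)
    \<and> (\<forall>a b. a > 0 \<longrightarrow> b > 0 \<longrightarrow> a + b \<le> pi/2 \<longrightarrow> E (a + b) < E a + E b)"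
proof (intro conjI ballI allI impI)
  show "concave_on {0..pi/2} E"
  proof (rule concave_interval[OF E_cont, of E1])
    fix x assume "0 < x" "x < pi/2"
    then show "(E has_real_derivative E1 x) (at x)" using pi_less_4 by (intro E_deriv) auto
  next
    fix x y :: real assume "0 < x" "x < y" "y < pi/2"
    then show "E1 y \<le> E1 x" using E1_decr by (simp add: less_imp_le)
  qed
next
  fix a :: real assume a: "a \<in> {0<..<pi/2}"
  have a2: "a < 2" using a pi_less_4 by auto
  show "E differentiable (at a)"
    using E_deriv[of a] a a2 unfolding real_differentiable_def by auto
  have eq: "\<And>y. y \<in> {0<..<pi/2} \<Longrightarrow> E1 y = deriv E y"
  proof -
    fix y :: real assume "y \<in> {0<..<pi/2}"
    then have "(E has_real_derivative E1 y) (at y)" using pi_less_4 by (intro E_deriv) auto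
    then show "E1 y = deriv E y" by (simp add: DERIV_imp_deriv)
  qed
  have d2: "(deriv E has_real_derivative E2 a) (at a)"
    using a by (intro has_field_derivative_transform_within_open[OF E1_deriv[of a] open_greaterThanLessThan[of 0 "pi/2"] _ eq]) auto
  then show "deriv E differentiable (at a)" unfolding real_differentiable_def by auto
  show "deriv (deriv E) a < 0" using DERIV_imp_deriv[OF d2] E2_neg a by auto
next
  fix a b :: real assume ab: "a > 0" "b > 0" "a + b \<le> pi/2"
  define h where "h x = E (x + b) - E x - E b" for x
  have "h 0 > h a"
  proof (rule DERIV_neg_imp_decreasing_open[OF ab(1)])
    fix x assume x: "0 < x" "x < a"
    have "((\<lambda>x. E (x + b)) has_real_derivative E1 (x + b)) (at x)"
      using DERIV_chain2[OF E_deriv[of "x+b"] DERIV_add[OF DERIV_ident DERIV_const[of b]]]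
        x ab pi_less_4 by auto
    moreover have "(E has_real_derivative E1 x) (at x)" using x ab pi_less_4 by (intro E_deriv) auto
    ultimately have "(h has_real_derivative E1 (x + b) - E1 x - 0) (at x)"
      unfolding h_def by (intro DERIV_diff DERIV_const)
    then have "(h has_real_derivative E1 (x + b) - E1 x) (at x)" by simp
    moreover have "E1 (x + b) - E1 x < 0" using E1_decr[of x "x + b"] x ab by auto
    ultimately show "\<exists>y. (h has_real_derivative y) (at x) \<and> y < 0" by auto
  next
    have "continuous_on {0..a} (\<lambda>x. E (x + b))"
      using ab by (intro continuous_on_compose2[OF E_cont]) (auto intro!: continuous_intros)
    moreover have "continuous_on {0..a} E" using ab by (intro continuous_on_subset[OF E_cont]) auto
    ultimately show "continuous_on {0..a} h" unfolding h_def by (intro continuous_intros)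
  qed
  then show "E (a + b) < E a + E b" by (simp add: h_def E_def)
qed

end
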